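(* (i) If $f(z)=z+a_2z^2+\dots+a_dz^d$ is univalent in the unit disk $\mathbb D$ and $a_d=1/d$, then $f'$ is self-dual in $\Pi_{d-1}$. (ii) If $f(z)=z+\frac{a_1}{z}+\dots+\frac{a_d}{z^d}$ is univalent in $\Delta=\widehat{\mathbb C}\setminus\overline{\mathbb D}$ and $a_d=-1/d$, then the polynomial $z\mapsto f'(1/z)$ is self-dual in $\Pi_{d+1}$.
   Context: $\Pi_k$ denotes the space of complex polynomials of degree $\le k$. For $p\in\Pi_k$ define $p^*(z)=z^k\,\overline{p(1/\bar z)}$; $p$ is self-dual in $\Pi_k$ if $p^*=p$. *)

theory Defs
  imports "HOL-Analysis.Analysis" "HOL-Computational_Algebra.Polynomial"
begin

text \<open>p is self-dual in Pi_k: p has degree at most k and p*(z) = z^k conj(p(1/conj z)) equals p.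
  The dual is given by the paper's formula, which is meaningful for z nonzero; as both
  sides are polynomials, equality on nonzero z is equality of polynomials.\<close>
definition self_dual :: "nat \<Rightarrow> complex poly \<Rightarrow> bool" where
  "self_dual k p \<longleftrightarrow> degree p \<le> k \<and>
     (\<forall>z. z \<noteq> 0 \<longrightarrow> z ^ k * cnj (poly p (1 / cnj z)) = poly p z)"

end

theory Submission imports Defs "HOL-Computational_Algebra.Fundamental_Theorem_Algebra" "HOL-Complex_Analysis.Conformal_Mappings"
begin

lemma prod_ge1_eq1:
  fixes f :: "nat \<Rightarrow> real"
  assumes "finite S" "\<And>i. i \<in> S \<Longrightarrow> f i \<ge> 1" "prod f S = 1" "j \<in> S"
  shows "f j = 1"
proof (rule ccontr)
  assume "f j \<noteq> 1"
  hence gt: "f j > 1" using assms(2)[OF assms(4)] by simp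
  have "prod f S = f j * prod f (S - {j})" using assms(1,4) by (rule prod.remove)
  moreover have "prod f (S - {j}) \<ge> 1" by (rule prod_ge_1) (simp add: assms(2))
  moreover have "f j * prod f (S - {j}) \<ge> f j * 1"
    by (rule mult_left_mono) (use calculation gt in auto)
  ultimately have "prod f S > 1" using gt by linarith
  thus False using assms(3) by simp
qed

lemma selfdual_crit:
  fixes q :: "complex poly"
  assumes deg: "degree q \<le> k" and lead: "coeff q k = 1" and c0: "coeff q 0 = 1"
    and nz: "\<And>z. norm z < 1 \<Longrightarrow> poly q z \<noteq> 0"
  shows "self_dual k q"
proof -
  have dk: "degree q = k" using deg lead by (metis coeff_eq_0 le_antisym not_le zero_neq_one)
  have lc: "lead_coeff q = 1" using dk lead by simp
  obtain r where r: "smult (lead_coeff q) (\<Prod>i<degree q. [:-r i, 1:]) = q"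
    using complex_poly_decompose' by blast
  have qr: "q = (\<Prod>i<k. [:-r i, 1:])" using r lc dk by simp
  have pq: "poly q z = (\<Prod>i<k. z - r i)" for z by (simp add: qr poly_prod)
  have rge: "norm (r i) \<ge> 1" if "i < k" for i
  proof -
    have "poly q (r i) = 0" unfolding pq using that by (intro prod_zero) auto
    thus ?thesis using nz by (meson not_le)
  qed
  have p0: "(\<Prod>i<k. - r i) = 1" using pq[of 0] c0 by (simp add: poly_0_coeff_0)
  hence "(\<Prod>i<k. norm (r i)) = 1"
  proof -
    have "norm (\<Prod>i<k. - r i) = 1" using p0 by simp
    thus ?thesis by (simp add: prod_norm[symmetric] del: prod_norm)
  qed
  hence r1: "norm (r i) = 1" if "i < k" for i
    using prod_ge1_eq1[of "{..<k}" "\<lambda>i. norm (r i)" i] rge that by auto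
  have rnz: "r i \<noteq> 0" if "i < k" for i using r1[OF that] by auto
  have cr: "cnj (r i) = 1 / r i" if "i < k" for i
    using divide_conv_cnj[OF r1[OF that], of 1] by simp
  show ?thesis unfolding self_dual_def
  proof (intro conjI allI impI)
    show "degree q \<le> k" by fact
    fix z :: complex assume z: "z \<noteq> 0"
    have "z ^ k * cnj (poly q (1 / cnj z)) = (\<Prod>i<k. z * cnj (1 / cnj z - r i))"
      by (simp add: pq prod.distrib)
    also have "\<dots> = (\<Prod>i<k. (1 / (- r i)) * (z - r i))"
    proof (rule prod.cong[OF refl])
      fix x assume "x \<in> {..<k}"
      hence x: "x < k" by simp
      have e: "cnj (1 / cnj z - r x) = 1 / z - 1 / r x" using cr[OF x] by simp
      have "z * (1 / z - 1 / r x) = 1 / (- r x) * (z - r x)"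
        using z rnz[OF x] by (simp add: field_simps)
      thus "z * cnj (1 / cnj z - r x) = 1 / (- r x) * (z - r x)" by (simp only: e)
    qed
    also have "\<dots> = (\<Prod>i<k. 1 / (- r i)) * poly q z"
      by (simp only: pq prod.distrib)
    finally have eq: "z ^ k * cnj (poly q (1 / cnj z)) = (\<Prod>i<k. 1 / (- r i)) * poly q z" .
    have "(\<Prod>i<k. 1 / (- r i)) = (\<Prod>i<k. 1) / (\<Prod>i<k. - r i)"
      by (rule prod_dividef)
    hence "(\<Prod>i<k. 1 / (- r i)) = 1" using p0 by (simp only: prod.neutral_const div_by_1)
    with eq show "z ^ k * cnj (poly q (1 / cnj z)) = poly q z" by simp
  qed
qed


lemma part1:
  fixes d :: nat and p :: "complex poly"
  assumes "d \<ge> 2" "degree p \<le> d" "coeff p 0 = 0" "coeff p 1 = 1"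
     "coeff p d = 1 / of_nat d" "inj_on (poly p) (ball 0 1)"
  shows "self_dual (d - 1) (pderiv p)"
proof (rule selfdual_crit)
  show "degree (pderiv p) \<le> d - 1" using assms(2) by (simp add: degree_pderiv)
  have "Suc (d - 1) = d" using assms(1) by simp
  thus "coeff (pderiv p) (d - 1) = 1" using assms(1,5) by (simp add: coeff_pderiv)
  show "coeff (pderiv p) 0 = 1" using assms(4) by (simp add: coeff_pderiv)
  fix z :: complex assume z: "norm z < 1"
  have hol: "poly p holomorphic_on ball 0 1"
  proof -
    have "poly p field_differentiable at w" for w
      using poly_DERIV field_differentiable_def by blast
    thus ?thesis by (simp add: holomorphic_on_def field_differentiable_at_within)
  qed
  have "deriv (poly p) z \<noteq> 0"
    by (rule holomorphic_injective_imp_regular[OF hol _ assms(6)]) (use z in auto)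
  moreover have "deriv (poly p) z = poly (pderiv p) z"
    by (rule DERIV_imp_deriv) (rule poly_DERIV)
  ultimately show "poly (pderiv p) z \<noteq> 0" by simp
qed

lemma part2:
  fixes d :: nat and a :: "nat \<Rightarrow> complex" and f :: "complex \<Rightarrow> complex"
  assumes d1: "d \<ge> 1" and fdef: "\<forall>z. f z = z + (\<Sum>k=1..d. a k / z ^ k)"
    and ad: "a d = - 1 / of_nat d" and inj: "inj_on f {z. 1 < norm z}"
  shows "\<exists>q. (\<forall>z. z \<noteq> 0 \<longrightarrow> poly q z = deriv f (1 / z)) \<and> self_dual (d + 1) q"
proof -
  have fe: "f = (\<lambda>z. z + (\<Sum>k=1..d. a k / z ^ k))" using fdef by auto
  define q where "q = [:1:] + (\<Sum>k=1..d. monom (- of_nat k * a k) (k+1))"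
  have pq: "poly q z = 1 + (\<Sum>k=1..d. - of_nat k * a k * z ^ (k+1))" for z
    by (simp add: q_def poly_sum poly_monom)
  have der: "(f has_field_derivative (1 + (\<Sum>k=1..d. - of_nat k * a k / w ^ (k+1)))) (at w)"
    if w: "w \<noteq> 0" for w
  proof -
    have pw: "w ^ Suc k * w ^ (k - Suc 0) = w ^ k * w ^ k" if "0 < k" for k
    proof -
      have "Suc k + (k - Suc 0) = k + k" using that by simp
      thus ?thesis by (metis power_add)
    qed
    have tk: "((\<lambda>z. a k / z ^ k) has_field_derivative (- of_nat k * a k / w ^ (k+1))) (at w)" for k
      using w pw by (auto intro!: derivative_eq_intros simp: field_simps power_Suc[symmetric]
         simp del: power_Suc)
    have "((\<lambda>z. \<Sum>k=1..d. a k / z ^ k) has_field_derivative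
       (\<Sum>k=1..d. - of_nat k * a k / w ^ (k+1))) (at w)"
      by (rule DERIV_sum) (rule tk)
    hence "((\<lambda>z. z + (\<Sum>k=1..d. a k / z ^ k)) has_field_derivative
       (1 + (\<Sum>k=1..d. - of_nat k * a k / w ^ (k+1)))) (at w)"
      by (intro DERIV_add DERIV_ident)
    thus ?thesis by (simp add: fe)
  qed
  have dq: "poly q z = deriv f (1 / z)" if z: "z \<noteq> 0" for z
  proof -
    have "deriv f (1/z) = 1 + (\<Sum>k=1..d. - of_nat k * a k / (1/z) ^ (k+1))"
      by (rule DERIV_imp_deriv[OF der]) (use z in simp)
    also have "\<dots> = poly q z" unfolding pq by (simp add: power_one_over)
    finally show ?thesis by simp
  qed
  have "self_dual (d + 1) q"
  proof (rule selfdual_crit)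
    show "degree q \<le> d + 1" unfolding q_def
      by (intro degree_add_le) (auto intro!: degree_sum_le order.trans[OF degree_monom_le])
    have "coeff q (d+1) = (\<Sum>k=1..d. if k = d then - of_nat k * a k else 0)"
      using d1 by (simp add: q_def coeff_sum coeff_monom)
    also have "\<dots> = 1" using d1 ad by (simp add: sum.delta)
    finally show "coeff q (d+1) = 1" .
    show "coeff q 0 = 1" by (simp add: q_def coeff_sum coeff_monom)
    fix z :: complex assume z: "norm z < 1"
    show "poly q z \<noteq> 0"
    proof (cases "z = 0")
      case True thus ?thesis by (simp add: pq)
    next
      case False
      let ?S = "{z::complex. 1 < norm z}"
      have op: "open ?S" by (intro open_Collect_less) (auto intro: continuous_intros)
      have hol: "f holomorphic_on ?S"
        unfolding holomorphic_on_def field_differentiable_def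
        by (metis (mono_tags, lifting) der has_field_derivative_at_within mem_Collect_eq
              norm_zero not_one_less_zero)
      have "1 < norm (1/z)" using False z by (simp add: norm_divide field_simps)
      hence "deriv f (1/z) \<noteq> 0"
        by (intro holomorphic_injective_imp_regular[OF hol op inj]) simp
      thus ?thesis using dq[OF False] by simp
    qed
  qed
  thus ?thesis using dq by blast
qed

theorem lemma2p9:
  shows "(\<forall>(d::nat) (p::complex poly).
            d \<ge> 2 \<and> degree p \<le> d \<and> coeff p 0 = 0 \<and> coeff p 1 = 1 \<and>
            coeff p d = 1 / of_nat d \<and> inj_on (poly p) (ball 0 1)
            \<longrightarrow> self_dual (d - 1) (pderiv p))
       \<and> (\<forall>(d::nat) (a::nat \<Rightarrow> complex) (f::complex \<Rightarrow> complex).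
            d \<ge> 1 \<and> (\<forall>z. f z = z + (\<Sum>k=1..d. a k / z ^ k)) \<and>
            a d = - 1 / of_nat d \<and> inj_on f {z. 1 < norm z}
            \<longrightarrow> (\<exists>q. (\<forall>z. z \<noteq> 0 \<longrightarrow> poly q z = deriv f (1 / z)) \<and> self_dual (d + 1) q))"
  using part1 part2 by blast

end
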